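(* Let $R$ be a finite set of variables, $\mu\in\mathcal{D}(\mathrm{Mem}[R])$, and $S\subseteq R$. The following are equivalent: (i) $S$ satisfies NA in $\mu$; (ii) $\mu$ is $\mathcal{S}$-PNA for every partition $\mathcal{S}$ of $S$; (iii) $\mu$ is $\{\{s\}\mid s\in S\}$-PNA.
   Context: Fix a set $\mathrm{Var}$ of variables; values are real numbers. For finite $S\subseteq\mathrm{Var}$, $\mathrm{Mem}[S]$ is the set of maps $S\to\mathbb{R}$, ordered pointwise; for $m\in\mathrm{Mem}[S]$ and $A\subseteq S$, $p_A(m)$ is the restriction of $m$ to $A$. A distribution on a set $Y$ is a countably supported $\mu:Y\to[0,1]$ with total mass $1$; $\mathcal{D}(Y)$ is the set of these; for $\mu\in\mathcal{D}(\mathrm{Mem}[S])$, $\mathrm{dom}(\mu)=S$ and, for $A\subseteq S$, $\pi_A\mu(x)=\sum_{x'\in\mathrm{Mem}[S],\,p_A(x')=x}\mu(x')$. Monotone means non-decreasing and antitone means non-increasing (w.r.t. the pointwise order). A partition is a set of pairwise disjoint nonempty sets; a partition $\mathcal{T}$ coarsens $\mathcal{S}$ if $\bigcup\mathcal{T}=\bigcup\mathcal{S}$ and each element of $\mathcal{T}$ is the union of some subfamily of $\mathcal{S}$. For $\mu\in\mathcal{D}(\mathrm{Mem}[R])$ and a partition $\mathcal{S}$ with $\bigcup\mathcal{S}\subseteq R$, $\mu$ is $\mathcal{S}$-PNA if for every $\mathcal{T}$ coarsening $\mathcal{S}$ and every family $(f_A:\mathrm{Mem}[A]\to[0,\infty))_{A\in\mathcal{T}}$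 of functions that are all monotone or all antitone, $\mathbb{E}_{m\sim\mu}[\prod_{A\in\mathcal{T}}f_A(p_Am)]\le\prod_{A\in\mathcal{T}}\mathbb{E}_{m\sim\mu}[f_A(p_Am)]$. For disjoint $A,B\subseteq R$, $\mu$ is $(A,B)$-NA if for every pair $f:\mathrm{Mem}[A]\to\mathbb{R}$, $g:\mathrm{Mem}[B]\to\mathbb{R}$ that are both monotone or both antitone, and each of which is bounded below or bounded above, $\mathbb{E}_{m\sim\mu}[f(p_Am)g(p_Bm)]\le\mathbb{E}_{m\sim\mu}[f(p_Am)]\cdot\mathbb{E}_{m\sim\mu}[g(p_Bm)]$. A set $S\subseteq R$ satisfies NA in $\mu$ if $\mu$ is $(A,B)$-NA for all disjoint $A,B\subseteq S$. *)

theory Defs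
  imports "HOL-Probability.Probability"
begin

definition Mem :: "'v set \<Rightarrow> ('v \<rightharpoonup> real) set" where
  "Mem S = {m. dom m = S}"

definition proj :: "'v set \<Rightarrow> ('v \<rightharpoonup> real) \<Rightarrow> ('v \<rightharpoonup> real)" where
  "proj A m = m |` A"

definition mem_le :: "'v set \<Rightarrow> ('v \<rightharpoonup> real) \<Rightarrow> ('v \<rightharpoonup> real) \<Rightarrow> bool" where
  "mem_le A m m' \<longleftrightarrow> (\<forall>x\<in>A. the (m x) \<le> the (m' x))"

definition monotone_mem :: "'v set \<Rightarrow> (('v \<rightharpoonup> real) \<Rightarrow> real) \<Rightarrow> bool" where
  "monotone_mem A f \<longleftrightarrow>
     (\<forall>m\<in>Mem A. \<forall>m'\<in>Mem A. mem_le A m m' \<longrightarrow> f m \<le> f m')"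

definition antitone_mem :: "'v set \<Rightarrow> (('v \<rightharpoonup> real) \<Rightarrow> real) \<Rightarrow> bool" where
  "antitone_mem A f \<longleftrightarrow>
     (\<forall>m\<in>Mem A. \<forall>m'\<in>Mem A. mem_le A m m' \<longrightarrow> f m' \<le> f m)"

definition bdd_below_mem :: "'v set \<Rightarrow> (('v \<rightharpoonup> real) \<Rightarrow> real) \<Rightarrow> bool" where
  "bdd_below_mem A f \<longleftrightarrow> (\<exists>c. \<forall>m\<in>Mem A. c \<le> f m)"

definition bdd_above_mem :: "'v set \<Rightarrow> (('v \<rightharpoonup> real) \<Rightarrow> real) \<Rightarrow> bool" where
  "bdd_above_mem A f \<longleftrightarrow> (\<exists>c. \<forall>m\<in>Mem A. f m \<le> c)"

definition is_dist_on :: "'v set \<Rightarrow> ('v \<rightharpoonup> real) pmf \<Rightarrow> bool" where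
  "is_dist_on R \<mu> \<longleftrightarrow> set_pmf \<mu> \<subseteq> Mem R"

definition is_partition :: "'v set set \<Rightarrow> bool" where
  "is_partition P \<longleftrightarrow> (\<forall>A\<in>P. A \<noteq> {}) \<and> (\<forall>A\<in>P. \<forall>B\<in>P. A \<noteq> B \<longrightarrow> A \<inter> B = {})"

definition coarsens :: "'v set set \<Rightarrow> 'v set set \<Rightarrow> bool" where
  "coarsens T S \<longleftrightarrow> \<Union>T = \<Union>S \<and> (\<forall>A\<in>T. \<exists>F\<subseteq>S. A = \<Union>F)"

text \<open>S-PNA. Expectations of nonnegative functions are taken in [0,\<infinity>] (nn_integral).\<close>
definition PNA :: "('v \<rightharpoonup> real) pmf \<Rightarrow> 'v set set \<Rightarrow> bool" where
  "PNA \<mu> S \<longleftrightarrow>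
    (\<forall>T f. is_partition T \<and> coarsens T S \<and>
        (\<forall>A\<in>T. \<forall>m\<in>Mem A. 0 \<le> f A m) \<and>
        ((\<forall>A\<in>T. monotone_mem A (f A)) \<or> (\<forall>A\<in>T. antitone_mem A (f A)))
      \<longrightarrow> (\<integral>\<^sup>+ m. ennreal (\<Prod>A\<in>T. f A (proj A m)) \<partial>measure_pmf \<mu>)
          \<le> (\<Prod>A\<in>T. \<integral>\<^sup>+ m. ennreal (f A (proj A m)) \<partial>measure_pmf \<mu>))"

text \<open>(A,B)-NA. Reading: the inequality of expectations is required whenever the
  three expectations exist as real numbers (integrability).\<close>
definition NA_pair :: "('v \<rightharpoonup> real) pmf \<Rightarrow> 'v set \<Rightarrow> 'v set \<Rightarrow> bool" where
  "NA_pair \<mu> A B \<longleftrightarrow>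
    (\<forall>f g. ((monotone_mem A f \<and> monotone_mem B g) \<or> (antitone_mem A f \<and> antitone_mem B g)) \<and>
        (bdd_below_mem A f \<or> bdd_above_mem A f) \<and> (bdd_below_mem B g \<or> bdd_above_mem B g) \<and>
        integrable (measure_pmf \<mu>) (\<lambda>m. f (proj A m)) \<and>
        integrable (measure_pmf \<mu>) (\<lambda>m. g (proj B m)) \<and>
        integrable (measure_pmf \<mu>) (\<lambda>m. f (proj A m) * g (proj B m))
      \<longrightarrow> measure_pmf.expectation \<mu> (\<lambda>m. f (proj A m) * g (proj B m))
          \<le> measure_pmf.expectation \<mu> (\<lambda>m. f (proj A m)) *
             measure_pmf.expectation \<mu> (\<lambda>m. g (proj B m)))"

definition satisfies_NA :: "('v \<rightharpoonup> real) pmf \<Rightarrow> 'v set \<Rightarrow> bool" where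
  "satisfies_NA \<mu> S \<longleftrightarrow> (\<forall>A B. A \<subseteq> S \<and> B \<subseteq> S \<and> A \<inter> B = {} \<longrightarrow> NA_pair \<mu> A B)"

end

theory Submission
  imports Defs
begin

lemma proj_Mem: "m \<in> Mem R \<Longrightarrow> A \<subseteq> R \<Longrightarrow> proj A m \<in> Mem A"
  by (auto simp: Mem_def proj_def)

lemma proj_proj: "A \<subseteq> U \<Longrightarrow> proj A (proj U m) = proj A m"
  by (simp add: proj_def Int_absorb1)

lemma mem_le_proj: "mem_le U m m' \<Longrightarrow> A \<subseteq> U \<Longrightarrow> mem_le A (proj A m) (proj A m')"
  by (auto simp: mem_le_def proj_def)

lemma pmf_integrable_bounded:
  fixes h :: "'a \<Rightarrow> real"
  assumes "\<And>m. \<bar>h m\<bar> \<le> B"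
  shows "integrable (measure_pmf \<mu>) h"
  by (rule measure_pmf.integrable_const_bound[where B=B]) (use assms in auto)

lemma prod_monotone:
  assumes "\<forall>A\<in>T. A \<subseteq> U" "\<forall>A\<in>T. \<forall>m. 0 \<le> f A m" "\<forall>A\<in>T. monotone_mem A (f A)"
  shows "monotone_mem U (\<lambda>m. \<Prod>A\<in>T. f A (proj A m))"
  unfolding monotone_mem_def
proof (intro ballI impI)
  fix m m' assume m: "m \<in> Mem U" "m' \<in> Mem U" "mem_le U m m'"
  show "(\<Prod>A\<in>T. f A (proj A m)) \<le> (\<Prod>A\<in>T. f A (proj A m'))"
  proof (rule prod_mono)
    fix A assume A: "A \<in> T"
    have "f A (proj A m) \<le> f A (proj A m')"
    proof -
      have AU: "A \<subseteq> U" using assms(1) A by blast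
      have "monotone_mem A (f A)" using assms(3) A by blast
      then show ?thesis unfolding monotone_mem_def
        using proj_Mem[OF m(1) AU] proj_Mem[OF m(2) AU] mem_le_proj[OF m(3) AU] by blast
    qed
    then show "0 \<le> f A (proj A m) \<and> f A (proj A m) \<le> f A (proj A m')"
      using assms(2) A by auto
  qed
qed

lemma prod_antitone:
  assumes "\<forall>A\<in>T. A \<subseteq> U" "\<forall>A\<in>T. \<forall>m. 0 \<le> f A m" "\<forall>A\<in>T. antitone_mem A (f A)"
  shows "antitone_mem U (\<lambda>m. \<Prod>A\<in>T. f A (proj A m))"
  unfolding antitone_mem_def
proof (intro ballI impI)
  fix m m' assume m: "m \<in> Mem U" "m' \<in> Mem U" "mem_le U m m'"
  show "(\<Prod>A\<in>T. f A (proj A m')) \<le> (\<Prod>A\<in>T. f A (proj A m))"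
  proof (rule prod_mono)
    fix A assume A: "A \<in> T"
    have "f A (proj A m') \<le> f A (proj A m)"
    proof -
      have AU: "A \<subseteq> U" using assms(1) A by blast
      have "antitone_mem A (f A)" using assms(3) A by blast
      then show ?thesis unfolding antitone_mem_def
        using proj_Mem[OF m(1) AU] proj_Mem[OF m(2) AU] mem_le_proj[OF m(3) AU] by blast
    qed
    then show "0 \<le> f A (proj A m') \<and> f A (proj A m') \<le> f A (proj A m)"
      using assms(2) A by auto
  qed
qed

lemma prod_mono_ennreal:
  fixes f g :: "'a \<Rightarrow> ennreal"
  shows "(\<And>i. i \<in> A \<Longrightarrow> f i \<le> g i) \<Longrightarrow> prod f A \<le> prod g A"
  by (induct A rule: infinite_finite_induct) (auto intro!: mult_mono)

lemma bnd_prod: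
  fixes \<mu> :: "('v \<rightharpoonup> real) pmf"
  assumes NA: "satisfies_NA \<mu> S" and "finite T" and "\<forall>A\<in>T. A \<subseteq> S"
    and "\<forall>A\<in>T. \<forall>B\<in>T. A \<noteq> B \<longrightarrow> A \<inter> B = {}"
    and "\<forall>A\<in>T. \<forall>m. 0 \<le> f A m \<and> f A m \<le> c"
    and "(\<forall>A\<in>T. monotone_mem A (f A)) \<or> (\<forall>A\<in>T. antitone_mem A (f A))"
  shows "measure_pmf.expectation \<mu> (\<lambda>m. \<Prod>A\<in>T. f A (proj A m))
         \<le> (\<Prod>A\<in>T. measure_pmf.expectation \<mu> (\<lambda>m. f A (proj A m)))"
  using assms(2-)
proof (induction T rule: finite_induct)
  case empty then show ?case by simp
next
  case (insert A0 T)
  define U where "U = \<Union>T"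
  define G where "G = (\<lambda>m. \<Prod>A\<in>T. f A (proj A m))"
  have GU: "G (proj U m) = (\<Prod>A\<in>T. f A (proj A m))" for m
    unfolding G_def U_def by (intro prod.cong refl) (simp add: proj_proj Union_upper)
  have sub: "\<forall>A\<in>T. A \<subseteq> U" unfolding U_def by auto
  have nnT: "\<forall>A\<in>T. \<forall>m. 0 \<le> f A m" using insert by auto
  have Gb: "0 \<le> G m \<and> G m \<le> c ^ card T" for m
  proof -
    have "G m \<le> (\<Prod>A\<in>T. c)" unfolding G_def by (rule prod_mono) (use insert in auto)
    then show ?thesis unfolding G_def using nnT by (auto intro: prod_nonneg)
  qed
  have f0b: "0 \<le> f A0 m \<and> f A0 m \<le> c" for m using insert by auto
  have disj: "A0 \<inter> U = {}"
  proof -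
    have "A0 \<inter> A = {}" if "A \<in> T" for A
    proof -
      have "A0 \<noteq> A" using insert(2) that by blast
      then show ?thesis using insert.prems(2) that by simp
    qed
    then show ?thesis unfolding U_def by blast
  qed
  have US: "U \<subseteq> S" using insert.prems(1) unfolding U_def by auto
  have A0S: "A0 \<subseteq> S" using insert.prems(1) by auto
  have NAp: "NA_pair \<mu> A0 U" using NA A0S US disj unfolding satisfies_NA_def by blast
  have monoG: "(monotone_mem A0 (f A0) \<and> monotone_mem U G) \<or> (antitone_mem A0 (f A0) \<and> antitone_mem U G)"
    using insert.prems(4) prod_monotone[OF sub nnT] prod_antitone[OF sub nnT] unfolding G_def by auto
  have bd1: "bdd_below_mem A0 (f A0)" unfolding bdd_below_mem_def using f0b by blast
  have bd2: "bdd_below_mem U G" unfolding bdd_below_mem_def using Gb by blast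
  have i1: "integrable (measure_pmf \<mu>) (\<lambda>m. f A0 (proj A0 m))"
    by (rule pmf_integrable_bounded[where B=c]) (use f0b in auto)
  have i2: "integrable (measure_pmf \<mu>) (\<lambda>m. G (proj U m))"
    by (rule pmf_integrable_bounded[where B="c ^ card T"]) (use Gb in auto)
  have i3: "integrable (measure_pmf \<mu>) (\<lambda>m. f A0 (proj A0 m) * G (proj U m))"
  proof (rule pmf_integrable_bounded[where B="c * c ^ card T"])
    fix m show "\<bar>f A0 (proj A0 m) * G (proj U m)\<bar> \<le> c * c ^ card T"
      using f0b[of "proj A0 m"] Gb[of "proj U m"] by (auto simp: abs_mult intro!: mult_mono)
  qed
  have key: "measure_pmf.expectation \<mu> (\<lambda>m. f A0 (proj A0 m) * G (proj U m))
      \<le> measure_pmf.expectation \<mu> (\<lambda>m. f A0 (proj A0 m)) * measure_pmf.expectation \<mu> (\<lambda>m. G (proj U m))"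
    using NAp monoG bd1 bd2 i1 i2 i3 unfolding NA_pair_def by blast
  have IH: "measure_pmf.expectation \<mu> (\<lambda>m. G (proj U m)) \<le> (\<Prod>A\<in>T. measure_pmf.expectation \<mu> (\<lambda>m. f A (proj A m)))"
    unfolding GU using insert by auto
  have e0: "0 \<le> measure_pmf.expectation \<mu> (\<lambda>m. f A0 (proj A0 m))"
    using f0b by (auto intro: integral_nonneg_AE)
  have "measure_pmf.expectation \<mu> (\<lambda>m. \<Prod>A\<in>insert A0 T. f A (proj A m))
      = measure_pmf.expectation \<mu> (\<lambda>m. f A0 (proj A0 m) * G (proj U m))"
    using insert(1,2) by (simp add: GU)
  also have "\<dots> \<le> measure_pmf.expectation \<mu> (\<lambda>m. f A0 (proj A0 m)) * (\<Prod>A\<in>T. measure_pmf.expectation \<mu> (\<lambda>m. f A (proj A m)))"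
    using key mult_left_mono[OF IH e0] by linarith
  finally show ?case using insert(1,2) by simp
qed


lemma NA_PNA:
  fixes \<mu> :: "('v \<rightharpoonup> real) pmf"
  assumes fin: "finite S" and supp: "set_pmf \<mu> \<subseteq> Mem R" and SR: "S \<subseteq> R"
    and NA: "satisfies_NA \<mu> S" and PS: "\<Union>P = S"
  shows "PNA \<mu> P"
  unfolding PNA_def
proof (intro allI impI, elim conjE)
  fix T and f :: "'v set \<Rightarrow> ('v \<rightharpoonup> real) \<Rightarrow> real"
  assume part: "is_partition T" and coar: "coarsens T P"
    and nn: "\<forall>A\<in>T. \<forall>m\<in>Mem A. 0 \<le> f A m"
    and mono: "(\<forall>A\<in>T. monotone_mem A (f A)) \<or> (\<forall>A\<in>T. antitone_mem A (f A))"
  have TS: "\<forall>A\<in>T. A \<subseteq> S" using coar PS unfolding coarsens_def by auto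
  have finT: "finite T" using TS fin by (meson Pow_iff finite_Pow_iff finite_subset subsetI)
  have disj: "\<forall>A\<in>T. \<forall>B\<in>T. A \<noteq> B \<longrightarrow> A \<inter> B = {}" using part unfolding is_partition_def by auto
  have sp: "proj A x \<in> Mem A" if "x \<in> set_pmf \<mu>" "A \<in> T" for x A
    using proj_Mem[of x R A] supp that TS SR by auto
  define fn where "fn n A m = (if m \<in> Mem A then min (f A m) (real n) else 0)" for n A m
  have fnb: "\<forall>A\<in>T. \<forall>m. 0 \<le> fn n A m \<and> fn n A m \<le> real n" for n
    using nn unfolding fn_def by auto
  have fnmono: "(\<forall>A\<in>T. monotone_mem A (fn n A)) \<or> (\<forall>A\<in>T. antitone_mem A (fn n A))" for n
    using mono unfolding fn_def monotone_mem_def antitone_mem_def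
    by (smt (verit, ccfv_SIG))
  have fnle: "fn n A (proj A x) \<le> f A (proj A x)" if "x \<in> set_pmf \<mu>" "A \<in> T" for n A x
    using sp[OF that] unfolding fn_def by auto
  have fninc: "fn n A m \<le> fn n' A m" if "n \<le> n'" for n n' A m
    using that unfolding fn_def by auto
  have step: "(\<integral>\<^sup>+ m. ennreal (\<Prod>A\<in>T. fn n A (proj A m)) \<partial>measure_pmf \<mu>)
      \<le> (\<Prod>A\<in>T. \<integral>\<^sup>+ m. ennreal (f A (proj A m)) \<partial>measure_pmf \<mu>)" for n
  proof -
    have i1: "integrable (measure_pmf \<mu>) (\<lambda>m. \<Prod>A\<in>T. fn n A (proj A m))"
    proof (rule pmf_integrable_bounded[where B="real n ^ card T"])
      fix m
      have "(\<Prod>A\<in>T. fn n A (proj A m)) \<le> (\<Prod>A\<in>T. real n)" by (rule prod_mono) (use fnb in auto)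
      moreover have "0 \<le> (\<Prod>A\<in>T. fn n A (proj A m))" using fnb by (auto intro!: prod_nonneg)
      ultimately show "\<bar>\<Prod>A\<in>T. fn n A (proj A m)\<bar> \<le> real n ^ card T" by simp
    qed
    have i2: "integrable (measure_pmf \<mu>) (\<lambda>m. fn n A (proj A m))" if "A \<in> T" for A
      by (rule pmf_integrable_bounded[where B="real n"]) (use fnb that in auto)
    have "(\<integral>\<^sup>+ m. ennreal (\<Prod>A\<in>T. fn n A (proj A m)) \<partial>measure_pmf \<mu>)
        = ennreal (measure_pmf.expectation \<mu> (\<lambda>m. \<Prod>A\<in>T. fn n A (proj A m)))"
      by (rule nn_integral_eq_integral[OF i1]) (use fnb in \<open>auto intro!: prod_nonneg\<close>)
    also have "\<dots> \<le> ennreal (\<Prod>A\<in>T. measure_pmf.expectation \<mu> (\<lambda>m. fn n A (proj A m)))"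
      by (rule ennreal_leI, rule bnd_prod[OF NA finT TS disj fnb fnmono])
    also have "\<dots> = (\<Prod>A\<in>T. ennreal (measure_pmf.expectation \<mu> (\<lambda>m. fn n A (proj A m))))"
      by (rule prod_ennreal[symmetric]) (use fnb in auto)
    also have "\<dots> = (\<Prod>A\<in>T. \<integral>\<^sup>+ m. ennreal (fn n A (proj A m)) \<partial>measure_pmf \<mu>)"
      by (intro prod.cong refl nn_integral_eq_integral[symmetric] i2) (use fnb in auto)
    also have "\<dots> \<le> (\<Prod>A\<in>T. \<integral>\<^sup>+ m. ennreal (f A (proj A m)) \<partial>measure_pmf \<mu>)"
      by (intro prod_mono_ennreal nn_integral_mono_AE AE_pmfI ennreal_leI fnle)
    finally show ?thesis .
  qed
  define F where "F n m = ennreal (\<Prod>A\<in>T. fn n A (proj A m))" for n m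
  have incF: "incseq F"
    unfolding incseq_def F_def
    by (auto intro!: le_funI ennreal_leI prod_mono fninc simp: fnb)
  have pt: "ennreal (\<Prod>A\<in>T. f A (proj A x)) = (SUP n. F n x)" if x: "x \<in> set_pmf \<mu>" for x
  proof -
    have "\<forall>A\<in>T. eventually (\<lambda>n. fn n A (proj A x) = f A (proj A x)) sequentially"
    proof
      fix A assume A: "A \<in> T"
      show "eventually (\<lambda>n. fn n A (proj A x) = f A (proj A x)) sequentially"
        using eventually_ge_at_top[of "nat \<lceil>f A (proj A x)\<rceil>"]
      proof (rule eventually_mono)
        fix n assume "nat \<lceil>f A (proj A x)\<rceil> \<le> n"
        then have "f A (proj A x) \<le> real n" by linarith
        then show "fn n A (proj A x) = f A (proj A x)" using sp[OF x A] unfolding fn_def by auto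
      qed
    qed
    then have "eventually (\<lambda>n. \<forall>A\<in>T. fn n A (proj A x) = f A (proj A x)) sequentially"
      by (rule eventually_ball_finite[OF finT])
    then obtain N where N: "\<forall>A\<in>T. fn N A (proj A x) = f A (proj A x)"
      unfolding eventually_sequentially by blast
    show ?thesis
    proof (rule antisym)
      show "ennreal (\<Prod>A\<in>T. f A (proj A x)) \<le> (SUP n. F n x)"
        by (rule SUP_upper2[of N]) (auto simp: F_def N)
      show "(SUP n. F n x) \<le> ennreal (\<Prod>A\<in>T. f A (proj A x))"
        by (rule SUP_least) (use fnb in \<open>auto simp: F_def intro!: ennreal_leI prod_mono fnle x\<close>)
    qed
  qed
  have "(\<integral>\<^sup>+ m. ennreal (\<Prod>A\<in>T. f A (proj A m)) \<partial>measure_pmf \<mu>)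
      = (\<integral>\<^sup>+ m. (SUP n. F n m) \<partial>measure_pmf \<mu>)"
    by (rule nn_integral_cong_AE) (auto intro!: AE_pmfI pt)
  also have "\<dots> = (SUP n. integral\<^sup>N (measure_pmf \<mu>) (F n))"
    by (rule nn_integral_monotone_convergence_SUP[OF incF]) auto
  also have "\<dots> \<le> (\<Prod>A\<in>T. \<integral>\<^sup>+ m. ennreal (f A (proj A m)) \<partial>measure_pmf \<mu>)"
    by (rule SUP_least) (use step in \<open>simp add: F_def[abs_def]\<close>)
  finally show "(\<integral>\<^sup>+ m. ennreal (\<Prod>A\<in>T. f A (proj A m)) \<partial>measure_pmf \<mu>)
      \<le> (\<Prod>A\<in>T. \<integral>\<^sup>+ m. ennreal (f A (proj A m)) \<partial>measure_pmf \<mu>)" .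
qed


lemma cov_bnd:
  fixes \<mu> :: "('v \<rightharpoonup> real) pmf" and F G :: "('v \<rightharpoonup> real) \<Rightarrow> real"
  assumes fin: "finite S" and PN: "PNA \<mu> {{s} | s. s \<in> S}"
    and AS: "A \<subseteq> S" and BS: "B \<subseteq> S" and AB: "A \<inter> B = {}" and An: "A \<noteq> {}" and Bn: "B \<noteq> {}"
    and Fb: "\<And>m. \<bar>F m\<bar> \<le> c" and Gb: "\<And>m. \<bar>G m\<bar> \<le> c"
    and mono: "(monotone_mem A F \<and> monotone_mem B G) \<or> (antitone_mem A F \<and> antitone_mem B G)"
  shows "measure_pmf.expectation \<mu> (\<lambda>m. F (proj A m) * G (proj B m))
     \<le> measure_pmf.expectation \<mu> (\<lambda>m. F (proj A m)) * measure_pmf.expectation \<mu> (\<lambda>m. G (proj B m))"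
proof -
  have c0: "0 \<le> c" using Fb[of undefined] by linarith
  define Rest where "Rest = (\<lambda>s. {s}) ` (S - A - B)"
  define T where "T = insert A (insert B Rest)"
  define f' where "f' X = (if X = A then (\<lambda>m. F m + c) else if X = B then (\<lambda>m. G m + c) else (\<lambda>m. 1))" for X
  have finR: "finite Rest" unfolding Rest_def using fin by auto
  have AnB: "A \<noteq> B" using AB An by auto
  have AR: "A \<notin> Rest" and BR: "B \<notin> Rest" unfolding Rest_def by auto
  have fR: "X \<in> Rest \<Longrightarrow> f' X = (\<lambda>m. 1)" for X unfolding f'_def using AR BR by auto
  have part: "is_partition T"
    unfolding is_partition_def T_def Rest_def using An Bn AB by auto
  have coar: "coarsens T {{s} | s. s \<in> S}"
    unfolding coarsens_def
  proof
    show "\<Union>T = \<Union>{{s} | s. s \<in> S}" unfolding T_def Rest_def using AS BS by auto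
    show "\<forall>X\<in>T. \<exists>Fa\<subseteq>{{s} |s. s \<in> S}. X = \<Union>Fa"
    proof
      fix X assume X: "X \<in> T"
      then have "X \<subseteq> S" unfolding T_def Rest_def using AS BS by auto
      then show "\<exists>Fa\<subseteq>{{s} |s. s \<in> S}. X = \<Union>Fa"
        by (intro exI[of _ "{{s} | s. s \<in> X}"]) auto
    qed
  qed
  have nn: "\<forall>X\<in>T. \<forall>m\<in>Mem X. 0 \<le> f' X m"
    unfolding f'_def using Fb Gb by (auto simp: abs_le_iff) (smt (verit))+
  have mono': "(\<forall>X\<in>T. monotone_mem X (f' X)) \<or> (\<forall>X\<in>T. antitone_mem X (f' X))"
    using mono unfolding T_def f'_def monotone_mem_def antitone_mem_def by auto
  have ineq: "(\<integral>\<^sup>+ m. ennreal (\<Prod>X\<in>T. f' X (proj X m)) \<partial>measure_pmf \<mu>)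
          \<le> (\<Prod>X\<in>T. \<integral>\<^sup>+ m. ennreal (f' X (proj X m)) \<partial>measure_pmf \<mu>)"
    using PN part coar nn mono' unfolding PNA_def by blast
  have e1: "(\<Prod>X\<in>T. f' X (proj X m)) = (F (proj A m) + c) * (G (proj B m) + c)" for m
  proof -
    have "(\<Prod>X\<in>T. f' X (proj X m)) = f' A (proj A m) * (f' B (proj B m) * (\<Prod>X\<in>Rest. f' X (proj X m)))"
      unfolding T_def using finR AR BR AnB by simp
    also have "(\<Prod>X\<in>Rest. f' X (proj X m)) = 1" by (simp add: fR)
    finally show ?thesis using AnB by (simp add: f'_def)
  qed
  have e2: "(\<Prod>X\<in>T. \<integral>\<^sup>+ m. ennreal (f' X (proj X m)) \<partial>measure_pmf \<mu>)
     = (\<integral>\<^sup>+ m. ennreal (F (proj A m) + c) \<partial>measure_pmf \<mu>) * (\<integral>\<^sup>+ m. ennreal (G (proj B m) + c) \<partial>measure_pmf \<mu>)"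
  proof -
    have "(\<Prod>X\<in>T. \<integral>\<^sup>+ m. ennreal (f' X (proj X m)) \<partial>measure_pmf \<mu>)
       = (\<integral>\<^sup>+ m. ennreal (f' A (proj A m)) \<partial>measure_pmf \<mu>) * ((\<integral>\<^sup>+ m. ennreal (f' B (proj B m)) \<partial>measure_pmf \<mu>)
          * (\<Prod>X\<in>Rest. \<integral>\<^sup>+ m. ennreal (f' X (proj X m)) \<partial>measure_pmf \<mu>))"
      unfolding T_def using finR AR BR AnB by simp
    also have "(\<Prod>X\<in>Rest. \<integral>\<^sup>+ m. ennreal (f' X (proj X m)) \<partial>measure_pmf \<mu>) = 1"
      by (simp add: fR measure_pmf.emeasure_space_1)
    finally show ?thesis using AnB by (simp add: f'_def)
  qed
  define X where "X m = F (proj A m)" for m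
  define Y where "Y m = G (proj B m)" for m
  have iX: "integrable (measure_pmf \<mu>) X" by (rule pmf_integrable_bounded[where B=c]) (auto simp: X_def Fb)
  have iY: "integrable (measure_pmf \<mu>) Y" by (rule pmf_integrable_bounded[where B=c]) (auto simp: Y_def Gb)
  have iXY: "integrable (measure_pmf \<mu>) (\<lambda>m. X m * Y m)"
    by (rule pmf_integrable_bounded[where B="c*c"]) (auto simp: X_def Y_def abs_mult intro!: mult_mono Fb Gb c0)
  have Xc: "0 \<le> X m + c" "0 \<le> Y m + c" for m using Fb Gb unfolding X_def Y_def by (auto simp: abs_le_iff) (smt (verit))+
  have iXc: "integrable (measure_pmf \<mu>) (\<lambda>m. X m + c)" using iX by auto
  have iYc: "integrable (measure_pmf \<mu>) (\<lambda>m. Y m + c)" using iY by auto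
  have iP: "integrable (measure_pmf \<mu>) (\<lambda>m. (X m + c) * (Y m + c))"
    using iXY iX iY by (simp add: algebra_simps)
  have "ennreal (measure_pmf.expectation \<mu> (\<lambda>m. (X m + c) * (Y m + c)))
      \<le> ennreal (measure_pmf.expectation \<mu> (\<lambda>m. X m + c)) * ennreal (measure_pmf.expectation \<mu> (\<lambda>m. Y m + c))"
    using ineq unfolding e1 e2 X_def[symmetric] Y_def[symmetric]
    by (subst (asm) (1 2 3) nn_integral_eq_integral) (use iXc iYc iP Xc in \<open>auto simp: X_def Y_def\<close>)
  also have "\<dots> = ennreal (measure_pmf.expectation \<mu> (\<lambda>m. X m + c) * measure_pmf.expectation \<mu> (\<lambda>m. Y m + c))"
    by (rule ennreal_mult[symmetric]) (auto intro!: integral_nonneg_AE simp: Xc)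
  finally have r: "measure_pmf.expectation \<mu> (\<lambda>m. (X m + c) * (Y m + c))
      \<le> measure_pmf.expectation \<mu> (\<lambda>m. X m + c) * measure_pmf.expectation \<mu> (\<lambda>m. Y m + c)"
    by (subst (asm) ennreal_le_iff) (auto intro!: mult_nonneg_nonneg integral_nonneg_AE simp: Xc)
  have "(\<lambda>m. (X m + c) * (Y m + c)) = (\<lambda>m. (X m * Y m + c * X m) + (c * Y m + c * c))"
    by (auto simp: algebra_simps)
  then have q1: "measure_pmf.expectation \<mu> (\<lambda>m. (X m + c) * (Y m + c))
     = measure_pmf.expectation \<mu> (\<lambda>m. X m * Y m) + c * measure_pmf.expectation \<mu> X + c * measure_pmf.expectation \<mu> Y + c * c"
    using iX iY iXY by simp
  have q2: "measure_pmf.expectation \<mu> (\<lambda>m. X m + c) = measure_pmf.expectation \<mu> X + c" using iX by simp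
  have q3: "measure_pmf.expectation \<mu> (\<lambda>m. Y m + c) = measure_pmf.expectation \<mu> Y + c" using iY by simp
  from r have "measure_pmf.expectation \<mu> (\<lambda>m. X m * Y m) \<le> measure_pmf.expectation \<mu> X * measure_pmf.expectation \<mu> Y"
    unfolding q1 q2 q3 by (simp add: algebra_simps)
  then show ?thesis unfolding X_def Y_def .
qed


lemma proj_empty: "proj {} m = Map.empty"
  by (simp add: proj_def)

lemma PNA1_NA:
  fixes \<mu> :: "('v \<rightharpoonup> real) pmf"
  assumes fin: "finite S" and PN: "PNA \<mu> {{s} | s. s \<in> S}"
  shows "satisfies_NA \<mu> S"
  unfolding satisfies_NA_def NA_pair_def
proof (intro allI impI, elim conjE)
  fix A B :: "'v set" and f g :: "('v \<rightharpoonup> real) \<Rightarrow> real"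
  assume AS: "A \<subseteq> S" and BS: "B \<subseteq> S" and AB: "A \<inter> B = {}"
    and mono: "monotone_mem A f \<and> monotone_mem B g \<or> antitone_mem A f \<and> antitone_mem B g"
    and iF: "integrable (measure_pmf \<mu>) (\<lambda>m. f (proj A m))"
    and iG: "integrable (measure_pmf \<mu>) (\<lambda>m. g (proj B m))"
    and iFG: "integrable (measure_pmf \<mu>) (\<lambda>m. f (proj A m) * g (proj B m))"
  show "measure_pmf.expectation \<mu> (\<lambda>m. f (proj A m) * g (proj B m))
     \<le> measure_pmf.expectation \<mu> (\<lambda>m. f (proj A m)) * measure_pmf.expectation \<mu> (\<lambda>m. g (proj B m))"
  proof (cases "A = {} \<or> B = {}")
    case True
    then show ?thesis by (auto simp: proj_empty)
  next
    case False
    then have An: "A \<noteq> {}" and Bn: "B \<noteq> {}" by auto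
    define cl where "cl n x = max (- real n) (min x (real n))" for n :: nat and x :: real
    have clb: "\<bar>cl n x\<bar> \<le> real n" for n x unfolding cl_def by auto
    have cla: "\<bar>cl n x\<bar> \<le> \<bar>x\<bar>" for n x unfolding cl_def by auto
    have clm: "x \<le> y \<Longrightarrow> cl n x \<le> cl n y" for n x y unfolding cl_def by auto
    have clev: "eventually (\<lambda>n. cl n x = x) sequentially" for x
      using eventually_ge_at_top[of "nat \<lceil>\<bar>x\<bar>\<rceil>"]
      by (rule eventually_mono) (auto simp: cl_def)
    have mono_n: "(monotone_mem A (\<lambda>m. cl n (f m)) \<and> monotone_mem B (\<lambda>m. cl n (g m)))
        \<or> (antitone_mem A (\<lambda>m. cl n (f m)) \<and> antitone_mem B (\<lambda>m. cl n (g m)))" for n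
      using mono clm unfolding monotone_mem_def antitone_mem_def by blast
    have step: "measure_pmf.expectation \<mu> (\<lambda>m. cl n (f (proj A m)) * cl n (g (proj B m)))
       \<le> measure_pmf.expectation \<mu> (\<lambda>m. cl n (f (proj A m))) * measure_pmf.expectation \<mu> (\<lambda>m. cl n (g (proj B m)))" for n
      by (rule cov_bnd[OF fin PN AS BS AB An Bn, where c="real n", OF clb clb mono_n])
    have l1: "(\<lambda>n. measure_pmf.expectation \<mu> (\<lambda>m. cl n (f (proj A m)) * cl n (g (proj B m))))
        \<longlonglongrightarrow> measure_pmf.expectation \<mu> (\<lambda>m. f (proj A m) * g (proj B m))"
    proof (rule integral_dominated_convergence[where w="\<lambda>m. \<bar>f (proj A m) * g (proj B m)\<bar>"])
      show "integrable (measure_pmf \<mu>) (\<lambda>m. \<bar>f (proj A m) * g (proj B m)\<bar>)" using iFG by auto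
      show "AE x in measure_pmf \<mu>. (\<lambda>n. cl n (f (proj A x)) * cl n (g (proj B x))) \<longlonglongrightarrow> f (proj A x) * g (proj B x)"
      proof (intro AE_I2 tendsto_eventually)
        fix x
        show "eventually (\<lambda>n. cl n (f (proj A x)) * cl n (g (proj B x)) = f (proj A x) * g (proj B x)) sequentially"
          using eventually_conj[OF clev[of "f (proj A x)"] clev[of "g (proj B x)"]] by (rule eventually_mono) simp
      qed
      show "AE x in measure_pmf \<mu>. norm (cl n (f (proj A x)) * cl n (g (proj B x))) \<le> \<bar>f (proj A x) * g (proj B x)\<bar>" for n
        by (intro AE_I2) (auto simp: abs_mult intro!: mult_mono cla)
    qed auto
    have l2: "(\<lambda>n. measure_pmf.expectation \<mu> (\<lambda>m. cl n (f (proj A m))))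
        \<longlonglongrightarrow> measure_pmf.expectation \<mu> (\<lambda>m. f (proj A m))"
    proof (rule integral_dominated_convergence[where w="\<lambda>m. \<bar>f (proj A m)\<bar>"])
      show "integrable (measure_pmf \<mu>) (\<lambda>m. \<bar>f (proj A m)\<bar>)" using iF by auto
      show "AE x in measure_pmf \<mu>. (\<lambda>n. cl n (f (proj A x))) \<longlonglongrightarrow> f (proj A x)"
        by (intro AE_I2 tendsto_eventually clev)
    qed (auto intro: cla)
    have l3: "(\<lambda>n. measure_pmf.expectation \<mu> (\<lambda>m. cl n (g (proj B m))))
        \<longlonglongrightarrow> measure_pmf.expectation \<mu> (\<lambda>m. g (proj B m))"
    proof (rule integral_dominated_convergence[where w="\<lambda>m. \<bar>g (proj B m)\<bar>"])
      show "integrable (measure_pmf \<mu>) (\<lambda>m. \<bar>g (proj B m)\<bar>)" using iG by auto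
      show "AE x in measure_pmf \<mu>. (\<lambda>n. cl n (g (proj B x))) \<longlonglongrightarrow> g (proj B x)"
        by (intro AE_I2 tendsto_eventually clev)
    qed (auto intro: cla)
    show ?thesis
      by (rule LIMSEQ_le[OF l1 tendsto_mult[OF l2 l3]]) (use step in auto)
  qed
qed

theorem mainTheorem4:
  fixes R S :: "'v set" and \<mu> :: "('v \<rightharpoonup> real) pmf"
  assumes "finite R" and "is_dist_on R \<mu>" and "S \<subseteq> R"
  shows "(satisfies_NA \<mu> S \<longleftrightarrow> (\<forall>P. is_partition P \<and> \<Union>P = S \<longrightarrow> PNA \<mu> P))
       \<and> ((\<forall>P. is_partition P \<and> \<Union>P = S \<longrightarrow> PNA \<mu> P) \<longleftrightarrow> PNA \<mu> {{s} | s. s \<in> S})"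
proof -
  have fin: "finite S" using assms(1,3) finite_subset by blast
  have supp: "set_pmf \<mu> \<subseteq> Mem R" using assms(2) unfolding is_dist_on_def .
  have sing: "is_partition {{s} | s. s \<in> S} \<and> \<Union>{{s} | s. s \<in> S} = S"
    unfolding is_partition_def by auto
  have i_ii: "satisfies_NA \<mu> S \<Longrightarrow> (\<forall>P. is_partition P \<and> \<Union>P = S \<longrightarrow> PNA \<mu> P)"
    using NA_PNA[OF fin supp assms(3)] by blast
  have ii_iii: "(\<forall>P. is_partition P \<and> \<Union>P = S \<longrightarrow> PNA \<mu> P) \<Longrightarrow> PNA \<mu> {{s} | s. s \<in> S}"
    using sing by blast
  have iii_i: "PNA \<mu> {{s} | s. s \<in> S} \<Longrightarrow> satisfies_NA \<mu> S"
    using PNA1_NA[OF fin] by blast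
  show ?thesis using i_ii ii_iii iii_i by blast
qed

end
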